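(* Let $\Delta \subset \mathbb{R}^2$ be a measurable set and let $f \in M^1$. Then for every $0<R<\infty$, \[ \Vert P_{\Delta}(V_{\varphi}f)\Vert_{1} \leq \frac{\rho(\Delta,R)}{1-e^{-\pi/R^{2}}}\cdot \Vert V_{\varphi}f\Vert_{1}. \]
   Context: Let $\varphi(t)=2^{1/4}e^{-\pi t^2}$ be the normalized Gaussian. The short-time Fourier transform (STFT) is $V_\varphi f(x,\omega)=\int_{\mathbb{R}} f(t)\overline{\varphi(t-x)}e^{-2\pi i \omega t}\,dt$, $(x,\omega)\in\mathbb{R}^2$ (extended to tempered distributions $f\in\mathcal{S}'(\mathbb{R})$). The modulation space $M^1$ is $\{f\in\mathcal{S}'(\mathbb{R}): \Vert V_\varphi f\Vert_{1}<\infty\}$, where $\Vert\cdot\Vert_1$ is the $L^1(\mathbb{R}^2)$ norm. For $A\subset\mathbb{R}^2$, $P_A$ denotes multiplication by the indicator function $\chi_A$. The planar maximum Nyquist density is $\rho(\Delta,R):=\sup_{z\in\mathbb{R}^2}|\Delta\cap(z+D_{1/R})|$, where $D_{1/R}\subset\mathbb{R}^2$ is the disc of radius $1/R$ centered at the origin and $|\cdot|$ is Lebesgue measure. *)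

theory Defs
  imports "HOL-Analysis.Analysis"
begin

definition gauss :: "real \<Rightarrow> real" where
  "gauss t = 2 powr (1/4) * exp (- pi * t\<^sup>2)"

definition stft :: "(real \<Rightarrow> complex) \<Rightarrow> real \<times> real \<Rightarrow> complex" where
  "stft f z = (LINT t|lborel. f t * cnj (complex_of_real (gauss (t - fst z)))
                 * exp (- 2 * pi * \<i> * complex_of_real (snd z * t)))"

definition L1norm :: "(real \<times> real \<Rightarrow> complex) \<Rightarrow> real" where
  "L1norm F = (LINT z|lebesgue. norm (F z))"

text \<open>Feichtinger algebra M^1: (as every element of M^1 is an integrable function)
  integrable f with integrable STFT.\<close>
definition M1 :: "(real \<Rightarrow> complex) set" where
  "M1 = {f. integrable lborel f \<and> integrable lebesgue (stft f)}"

definition proj :: "(real \<times> real) set \<Rightarrow> (real \<times> real \<Rightarrow> complex) \<Rightarrow> real \<times> real \<Rightarrow> complex" where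
  "proj A F z = indicator A z * F z"

definition nyquist_density :: "(real \<times> real) set \<Rightarrow> real \<Rightarrow> real" where
  "nyquist_density \<Delta> R = (SUP z. measure lebesgue (\<Delta> \<inter> ball z (1 / R)))"

end

theory Submission
  imports Defs "HOL-Complex_Analysis.Complex_Analysis"
begin


definition rot :: "real \<Rightarrow> real \<times> real \<Rightarrow> real \<times> real" where
  "rot th w = (fst w * cos th + snd w * sin th, snd w * cos th - fst w * sin th)"

lemma norm_rot [simp]: "norm (rot th w) = norm w"
proof -
  have "(fst w * cos th + snd w * sin th)\<^sup>2 + (snd w * cos th - fst w * sin th)\<^sup>2
        = ((fst w)\<^sup>2 + (snd w)\<^sup>2) * ((sin th)\<^sup>2 + (cos th)\<^sup>2)"
    by (simp only: power2_eq_square) algebra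
  thus ?thesis by (cases w) (simp add: rot_def norm_Pair)
qed

lemma continuous_rot: "continuous_on UNIV (\<lambda>p::real\<times>(real\<times>real). rot (fst p) (snd p))"
  unfolding rot_def by (intro continuous_intros)

lemma measurable_rot [measurable]: "(\<lambda>p::real\<times>(real\<times>real). rot (fst p) (snd p)) \<in> borel_measurable borel"
  using continuous_rot by (rule borel_measurable_continuous_onI)

lemma measurable_rot1 [measurable]: "rot th \<in> borel_measurable borel"
  unfolding rot_def by (intro borel_measurable_continuous_onI continuous_intros)

lemma shear_x_inv:
  fixes h :: "real \<times> real \<Rightarrow> ennreal"
  assumes [measurable]: "h \<in> borel_measurable borel"
  shows "(\<integral>\<^sup>+p. h (fst p + k * snd p, snd p) \<partial>lborel) = (\<integral>\<^sup>+p. h p \<partial>lborel)"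
proof -
  have [measurable]: "h \<in> borel_measurable (lborel \<Otimes>\<^sub>M lborel)" by (simp add: lborel_prod)
  have "(\<integral>\<^sup>+p. h (fst p + k * snd p, snd p) \<partial>lborel)
      = (\<integral>\<^sup>+p. h (fst p + k * snd p, snd p) \<partial>(lborel \<Otimes>\<^sub>M lborel))"
    by (simp only: lborel_prod)
  also have "\<dots> = (\<integral>\<^sup>+y. \<integral>\<^sup>+x. h (x + k * y, y) \<partial>lborel \<partial>lborel)"
    by (subst lborel_pair.nn_integral_snd[symmetric]) simp_all
  also have "\<dots> = (\<integral>\<^sup>+y. \<integral>\<^sup>+x. h (x, y) \<partial>lborel \<partial>lborel)"
  proof (rule nn_integral_cong)
    fix y :: real
    have "(\<integral>\<^sup>+x. h (x, y) \<partial>lborel) = (\<integral>\<^sup>+x. h (x, y) \<partial>(distr lborel borel ((+) (k*y))))"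
      by (simp add: lborel_distr_plus)
    also have "\<dots> = (\<integral>\<^sup>+x. h (k * y + x, y) \<partial>lborel)"
      by (subst nn_integral_distr) simp_all
    finally show "(\<integral>\<^sup>+x. h (x + k * y, y) \<partial>lborel) = (\<integral>\<^sup>+x. h (x, y) \<partial>lborel)"
      by (simp add: add.commute)
  qed
  also have "\<dots> = (\<integral>\<^sup>+p. h p \<partial>(lborel \<Otimes>\<^sub>M lborel))"
    by (subst lborel_pair.nn_integral_snd[symmetric]) simp_all
  also have "\<dots> = (\<integral>\<^sup>+p. h p \<partial>lborel)"
    by (simp only: lborel_prod)
  finally show ?thesis .
qed

lemma shear_y_inv:
  fixes h :: "real \<times> real \<Rightarrow> ennreal"
  assumes [measurable]: "h \<in> borel_measurable borel"
  shows "(\<integral>\<^sup>+p. h (fst p, snd p + k * fst p) \<partial>lborel) = (\<integral>\<^sup>+p. h p \<partial>lborel)"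
proof -
  have [measurable]: "h \<in> borel_measurable (lborel \<Otimes>\<^sub>M lborel)" by (simp add: lborel_prod)
  have "(\<integral>\<^sup>+p. h (fst p, snd p + k * fst p) \<partial>lborel)
      = (\<integral>\<^sup>+p. h (fst p, snd p + k * fst p) \<partial>(lborel \<Otimes>\<^sub>M lborel))"
    by (simp only: lborel_prod)
  also have "\<dots> = (\<integral>\<^sup>+x. \<integral>\<^sup>+y. h (x, y + k * x) \<partial>lborel \<partial>lborel)"
    by (subst lborel.nn_integral_fst[symmetric]) simp_all
  also have "\<dots> = (\<integral>\<^sup>+x. \<integral>\<^sup>+y. h (x, y) \<partial>lborel \<partial>lborel)"
  proof (rule nn_integral_cong)
    fix x :: real
    have "(\<integral>\<^sup>+y. h (x, y) \<partial>lborel) = (\<integral>\<^sup>+y. h (x, y) \<partial>(distr lborel borel ((+) (k*x))))"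
      by (simp add: lborel_distr_plus)
    also have "\<dots> = (\<integral>\<^sup>+y. h (x, k * x + y) \<partial>lborel)"
      by (subst nn_integral_distr) simp_all
    finally show "(\<integral>\<^sup>+y. h (x, y + k * x) \<partial>lborel) = (\<integral>\<^sup>+y. h (x, y) \<partial>lborel)"
      by (simp add: add.commute)
  qed
  also have "\<dots> = (\<integral>\<^sup>+p. h p \<partial>(lborel \<Otimes>\<^sub>M lborel))"
    by (subst lborel.nn_integral_fst[symmetric]) simp_all
  also have "\<dots> = (\<integral>\<^sup>+p. h p \<partial>lborel)"
    by (simp only: lborel_prod)
  finally show ?thesis .
qed

definition shx :: "real \<Rightarrow> real \<times> real \<Rightarrow> real \<times> real" where
  "shx k p = (fst p + k * snd p, snd p)"
definition shy :: "real \<Rightarrow> real \<times> real \<Rightarrow> real \<times> real" where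
  "shy k p = (fst p, snd p + k * fst p)"

lemma shx_meas [measurable]: "shx k \<in> borel_measurable borel"
  unfolding shx_def by (intro borel_measurable_continuous_onI continuous_intros)
lemma shy_meas [measurable]: "shy k \<in> borel_measurable borel"
  unfolding shy_def by (intro borel_measurable_continuous_onI continuous_intros)

lemma shx_inv: "h \<in> borel_measurable borel \<Longrightarrow> (\<integral>\<^sup>+p. h (shx k p) \<partial>lborel) = (\<integral>\<^sup>+p. h p \<partial>lborel)"
  unfolding shx_def by (rule shear_x_inv)
lemma shy_inv: "h \<in> borel_measurable borel \<Longrightarrow> (\<integral>\<^sup>+p. h (shy k p) \<partial>lborel) = (\<integral>\<^sup>+p. h p \<partial>lborel)"
  unfolding shy_def by (rule shear_y_inv)

lemma rot_shear:
  assumes "cos (th/2) \<noteq> 0"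
  shows "rot th p = shx (tan (th/2)) (shy (- sin th) (shx (tan (th/2)) p))"
proof -
  define u where "u = th/2"
  have th: "th = 2*u" by (simp add: u_def)
  have c: "cos u \<noteq> 0" using assms by (simp add: u_def)
  have s2: "sin th = 2 * sin u * cos u" and c2: "cos th = 1 - 2 * (sin u)^2"
    by (simp_all add: th sin_double cos_double_sin)
  have cc: "cos u * cos u = 1 - sin u * sin u"
    using sin_cos_squared_add[of u] by (simp add: power2_eq_square)
  show ?thesis unfolding rot_def shx_def shy_def prod_eq_iff fst_conv snd_conv u_def[symmetric]
    using c by (simp add: tan_def s2 c2 field_simps power2_eq_square)
      (use cc in algebra)
qed

lemma rot_inv_aux:
  fixes h :: "real \<times> real \<Rightarrow> ennreal"
  assumes [measurable]: "h \<in> borel_measurable borel" and c: "cos (th/2) \<noteq> 0"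
  shows "(\<integral>\<^sup>+p. h (rot th p) \<partial>lborel) = (\<integral>\<^sup>+p. h p \<partial>lborel)"
proof -
  let ?t = "tan (th/2)" and ?k = "- sin th"
  have "(\<integral>\<^sup>+p. h (rot th p) \<partial>lborel) = (\<integral>\<^sup>+p. (\<lambda>q. h (shx ?t (shy ?k q))) (shx ?t p) \<partial>lborel)"
    using rot_shear[OF c] by simp
  also have "\<dots> = (\<integral>\<^sup>+q. (\<lambda>q. h (shx ?t q)) (shy ?k q) \<partial>lborel)"
    by (rule shx_inv) measurable
  also have "\<dots> = (\<integral>\<^sup>+q. h (shx ?t q) \<partial>lborel)"
    by (rule shy_inv) measurable
  also have "\<dots> = (\<integral>\<^sup>+q. h q \<partial>lborel)"
    by (rule shx_inv) measurable
  finally show ?thesis .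
qed

lemma rot_rot: "rot a (rot b p) = rot (a + b) p"
  unfolding rot_def by (simp add: cos_add sin_add algebra_simps)

lemma rot_inv:
  fixes h :: "real \<times> real \<Rightarrow> ennreal"
  assumes [measurable]: "h \<in> borel_measurable borel"
  shows "(\<integral>\<^sup>+p. h (rot th p) \<partial>lborel) = (\<integral>\<^sup>+p. h p \<partial>lborel)"
proof (cases "cos (th/2) = 0")
  case False
  then show ?thesis by (rule rot_inv_aux[OF assms])
next
  case True
  have c4: "cos (th/2/2) \<noteq> 0"
  proof
    assume "cos (th/2/2) = 0"
    hence "cos (th/2) = -1" using cos_double_cos[of "th/2/2"] by simp
    with True show False by simp
  qed
  have "(\<integral>\<^sup>+p. h (rot th p) \<partial>lborel) = (\<integral>\<^sup>+p. (\<lambda>q. h (rot (th/2) q)) (rot (th/2) p) \<partial>lborel)"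
    by (simp add: rot_rot)
  also have "\<dots> = (\<integral>\<^sup>+q. h (rot (th/2) q) \<partial>lborel)"
    by (rule rot_inv_aux[OF _ c4]) measurable
  also have "\<dots> = (\<integral>\<^sup>+q. h q \<partial>lborel)"
    by (rule rot_inv_aux[OF _ c4]) measurable
  finally show ?thesis .
qed

lemma area_mean:
  fixes g :: "real \<times> real \<Rightarrow> real" and \<psi> :: "real \<times> real \<Rightarrow> real"
  assumes g[measurable]: "g \<in> borel_measurable borel" and gnn: "\<And>w. 0 \<le> g w"
  and psi[measurable]: "\<psi> \<in> borel_measurable borel" and psinn: "\<And>w. 0 \<le> \<psi> w"
  and rad: "\<And>th w. \<psi> (rot th w) = \<psi> w"
  and mean: "\<And>w. ennreal (g 0) \<le> (\<integral>\<^sup>+ a. indicator {0..1} a * ennreal (g (rot (2*pi*a) w)) \<partial>lborel)"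
  shows "ennreal (g 0) * (\<integral>\<^sup>+w. \<psi> w \<partial>lborel) \<le> (\<integral>\<^sup>+ w. ennreal (\<psi> w * g w) \<partial>lborel)"
proof -
  let ?R = "(\<integral>\<^sup>+ w. ennreal (\<psi> w * g w) \<partial>lborel)"
  have gw: "(\<lambda>p::real \<times> (real \<times> real). g (rot (2*pi*fst p) (snd p))) \<in> borel_measurable borel"
  proof -
    have c: "(\<lambda>p::real \<times> (real \<times> real). rot (2*pi*fst p) (snd p)) \<in> borel_measurable borel"
      unfolding rot_def by (intro borel_measurable_continuous_onI continuous_intros)
    show ?thesis using measurable_compose[OF c g] by (simp add: o_def)
  qed
  have "(\<integral>\<^sup>+ a. indicator {0..1::real} a * ?R \<partial>lborel) = (\<integral>\<^sup>+ a. indicator {0..1::real} a \<partial>lborel) * ?R"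
  proof -
    have m: "(indicator {0..1} :: real \<Rightarrow> ennreal) \<in> borel_measurable lborel" by measurable
    show ?thesis by (rule nn_integral_multc[OF m])
  qed
  hence "?R = (\<integral>\<^sup>+ a. indicator {0..1::real} a * ?R \<partial>lborel)" by simp
  also have "\<dots> = (\<integral>\<^sup>+ a. indicator {0..1} a * (\<integral>\<^sup>+ w. ennreal (\<psi> w * g (rot (2*pi*a) w)) \<partial>lborel) \<partial>lborel)"
  proof (rule nn_integral_cong)
    fix a :: real
    have "(\<integral>\<^sup>+ w. ennreal (\<psi> w * g (rot (2*pi*a) w)) \<partial>lborel)
        = (\<integral>\<^sup>+ w. (\<lambda>q. ennreal (\<psi> q * g q)) (rot (2*pi*a) w) \<partial>lborel)"
      by (simp add: rad)
    also have "\<dots> = ?R" by (rule rot_inv) measurable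
    finally show "indicator {0..1} a * ?R = indicator {0..1} a * (\<integral>\<^sup>+ w. ennreal (\<psi> w * g (rot (2*pi*a) w)) \<partial>lborel)"
      by simp
  qed
  also have "\<dots> = (\<integral>\<^sup>+ a. \<integral>\<^sup>+ w. indicator {0..1} a * ennreal (\<psi> w * g (rot (2*pi*a) w)) \<partial>lborel \<partial>lborel)"
    by (rule nn_integral_cong, rule nn_integral_cmult[symmetric], use gw in measurable)
  also have "\<dots> = (\<integral>\<^sup>+ w. \<integral>\<^sup>+ a. indicator {0..1} a * ennreal (\<psi> w * g (rot (2*pi*a) w)) \<partial>lborel \<partial>lborel)"
  proof -
    have gw': "(\<lambda>p::real \<times> (real \<times> real). g (rot (2*pi*fst p) (snd p))) \<in> borel_measurable (lborel \<Otimes>\<^sub>M lborel)"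
      using gw by (simp add: lborel_prod)
    show ?thesis by (rule lborel_pair.Fubini'[symmetric]) (use gw' in measurable)
  qed
  also have "\<dots> = (\<integral>\<^sup>+ w. ennreal (\<psi> w) * (\<integral>\<^sup>+ a. indicator {0..1} a * ennreal (g (rot (2*pi*a) w)) \<partial>lborel) \<partial>lborel)"
  proof (rule nn_integral_cong)
    fix w
    show "(\<integral>\<^sup>+ a. indicator {0..1} a * ennreal (\<psi> w * g (rot (2*pi*a) w)) \<partial>lborel)
      = ennreal (\<psi> w) * (\<integral>\<^sup>+ a. indicator {0..1} a * ennreal (g (rot (2*pi*a) w)) \<partial>lborel)"
    proof -
      have c: "(\<lambda>a::real. rot (2*pi*a) w) \<in> borel_measurable borel"
        unfolding rot_def by (intro borel_measurable_continuous_onI continuous_intros)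
      have hm: "(\<lambda>a. indicator {0..1} a * ennreal (g (rot (2*pi*a) w))) \<in> borel_measurable lborel"
        using measurable_compose[OF c g] by (simp add: o_def)
      show ?thesis
        by (subst nn_integral_cmult[OF hm, symmetric])
           (auto intro!: nn_integral_cong simp: ennreal_mult psinn gnn mult_ac)
    qed
  qed
  also have "\<dots> \<ge> (\<integral>\<^sup>+ w. ennreal (\<psi> w) * ennreal (g 0) \<partial>lborel)"
    by (intro nn_integral_mono mult_left_mono mean) simp
  also have "(\<integral>\<^sup>+ w. ennreal (\<psi> w) * ennreal (g 0) \<partial>lborel) = ennreal (g 0) * (\<integral>\<^sup>+w. \<psi> w \<partial>lborel)"
    by (simp add: nn_integral_multc mult.commute)
  finally show ?thesis .
qed



lemma emeasure_cball2: "0 \<le> s \<Longrightarrow> emeasure lborel (cball (0::real\<times>real) s) = ennreal (pi * s\<^sup>2)"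
  by (simp add: emeasure_cball unit_ball_vol_2 power2_eq_square)

lemma emeasure_ball2: "0 \<le> s \<Longrightarrow> emeasure lborel (ball (0::real\<times>real) s) = ennreal (pi * s\<^sup>2)"
  by (simp add: emeasure_ball unit_ball_vol_2 power2_eq_square)

lemma FTC_nn:
  fixes f F :: "real \<Rightarrow> real"
  assumes "a \<le> b" and der: "\<And>x. a \<le> x \<Longrightarrow> x \<le> b \<Longrightarrow> (F has_real_derivative f x) (at x within {a..b})"
    and nn: "\<And>x. a \<le> x \<Longrightarrow> x \<le> b \<Longrightarrow> 0 \<le> f x"
  shows "(\<integral>\<^sup>+x. ennreal (f x) * indicator {a..b} x \<partial>lborel) = ennreal (F b - F a)"
proof (rule nn_integral_has_integral_lebesgue')
  show "(f has_integral F b - F a) {a..b}"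
    using assms by (intro fundamental_theorem_of_calculus) (auto simp: has_real_derivative_iff_has_vector_derivative[symmetric])
qed (use nn in auto)

lemma gauss_disc:
  assumes r: "0 < r"
  shows "(\<integral>\<^sup>+w. ennreal (indicator (ball (0::real\<times>real) r) w * exp (-pi * (norm w)\<^sup>2 / 2)) \<partial>lborel)
         = ennreal (2 - 2 * exp (-pi * r\<^sup>2 / 2))"
proof -
  define m where "m s = pi * s * exp (-pi * s\<^sup>2 / 2)" for s :: real
  define E where "E s = - exp (-pi * s\<^sup>2 / 2)" for s :: real
  have derE: "(E has_real_derivative m s) (at s within X)" for s X
    unfolding E_def m_def by (auto intro!: derivative_eq_intros simp: power2_eq_square)
  have [measurable]: "ball (0::real\<times>real) r \<in> sets borel" by simp
  have [measurable]: "Measurable.pred (borel \<Otimes>\<^sub>M borel) (\<lambda>x::(real\<times>real)\<times>real. snd x \<in> {norm (fst x)..r})"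
    unfolding atLeastAtMost_iff by measurable
  have [measurable]: "Measurable.pred (borel \<Otimes>\<^sub>M borel) (\<lambda>x::real\<times>(real\<times>real). fst x \<in> {norm (snd x)..r})"
    unfolding atLeastAtMost_iff by measurable
  have mnn: "0 \<le> s \<Longrightarrow> 0 \<le> m s" for s by (simp add: m_def)
  have [measurable]: "m \<in> borel_measurable borel" unfolding m_def by measurable
  have layer: "ennreal (indicator (ball (0::real\<times>real) r) w * exp (-pi * (norm w)\<^sup>2 / 2))
     = indicator (ball (0::real\<times>real) r) w * ennreal (exp (-pi * r\<^sup>2 / 2))
       + (\<integral>\<^sup>+s. indicator (ball (0::real\<times>real) r) w * (ennreal (m s) * indicator {norm w..r} s) \<partial>lborel)" for w :: "real \<times> real"
  proof (cases "w \<in> ball (0::real\<times>real) r")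
    case True
    hence le: "norm w \<le> r" by simp
    have "(\<integral>\<^sup>+s. ennreal (m s) * indicator {norm w..r} s \<partial>lborel) = ennreal (E r - E (norm w))"
      by (rule FTC_nn[OF le derE]) (meson mnn norm_ge_zero order_trans)
    moreover have "exp (-pi * (norm w)\<^sup>2 / 2) = exp (-pi * r\<^sup>2 / 2) + (E r - E (norm w))"
      by (simp add: E_def)
    moreover have d: "exp (-pi * r\<^sup>2 / 2) \<le> exp (-pi * (norm w)\<^sup>2 / 2)"
      using le by (simp add: power_mono)
    ultimately show ?thesis using True
      by (simp add: ennreal_plus[symmetric] E_def del: ennreal_plus)
  qed simp
  have "(\<integral>\<^sup>+w. ennreal (indicator (ball (0::real\<times>real) r) w * exp (-pi * (norm w)\<^sup>2 / 2)) \<partial>lborel)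
     = (\<integral>\<^sup>+w. indicator (ball (0::real\<times>real) r) w * ennreal (exp (-pi * r\<^sup>2 / 2)) \<partial>lborel)
       + (\<integral>\<^sup>+w. \<integral>\<^sup>+s. indicator (ball (0::real\<times>real) r) w * (ennreal (m s) * indicator {norm w..r} s) \<partial>lborel \<partial>lborel)"
    unfolding nn_integral_cong[OF layer] by (rule nn_integral_add) measurable
  also have "(\<integral>\<^sup>+w. indicator (ball (0::real\<times>real) r) w * ennreal (exp (-pi * r\<^sup>2 / 2)) \<partial>lborel)
     = ennreal (pi * r\<^sup>2 * exp (-pi * r\<^sup>2 / 2))"
    using r by (simp add: nn_integral_multc emeasure_ball2 ennreal_mult)
  also have "(\<integral>\<^sup>+w. \<integral>\<^sup>+s. indicator (ball (0::real\<times>real) r) w * (ennreal (m s) * indicator {norm w..r} s) \<partial>lborel \<partial>lborel)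
      = (\<integral>\<^sup>+s. \<integral>\<^sup>+w. indicator (ball (0::real\<times>real) r) w * (ennreal (m s) * indicator {norm w..r} s) \<partial>lborel \<partial>lborel)"
    by (rule lborel_pair.Fubini') measurable
  also have "\<dots> = (\<integral>\<^sup>+s. ennreal (pi * s\<^sup>2 * m s) * indicator {0..r} s \<partial>lborel)"
  proof (rule nn_integral_cong)
    fix s :: real
    have "(\<integral>\<^sup>+w. indicator (ball (0::real\<times>real) r) w * (ennreal (m s) * indicator {norm w..r} s) \<partial>lborel)
       = (\<integral>\<^sup>+w. ennreal (m s) * indicator {w::real\<times>real. norm w < r \<and> norm w \<le> s \<and> s \<le> r} w \<partial>lborel)"
      by (intro nn_integral_cong) (auto simp: indicator_def)
    also have "\<dots> = ennreal (m s) * emeasure lborel {w::real\<times>real. norm w < r \<and> norm w \<le> s \<and> s \<le> r}"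
      by (rule nn_integral_cmult_indicator) measurable
    also have "\<dots> = ennreal (pi * s\<^sup>2 * m s) * indicator {0..r} s"
    proof (cases "0 \<le> s \<and> s \<le> r")
      case True
      show ?thesis
      proof (cases "s = r")
        case True
        hence "{w::real\<times>real. norm w < r \<and> norm w \<le> s \<and> s \<le> r} = ball (0::real\<times>real) r" by auto
        thus ?thesis using \<open>0 \<le> s \<and> s \<le> r\<close> True mnn[of s]
          by (simp add: emeasure_ball2 ennreal_mult[symmetric] mult_ac)
      next
        case False
        hence "{w::real\<times>real. norm w < r \<and> norm w \<le> s \<and> s \<le> r} = cball 0 s" using True by auto
        thus ?thesis using True mnn[of s]
          by (simp add: emeasure_cball2 ennreal_mult[symmetric] mult_ac)
      qed
    next
      case False
      hence e: "{w::real\<times>real. norm w < r \<and> norm w \<le> s \<and> s \<le> r} = {}"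
        by (auto dest: order_trans[OF norm_ge_zero])
      show ?thesis using False unfolding e by simp
    qed
    finally show "(\<integral>\<^sup>+w. indicator (ball (0::real\<times>real) r) w * (ennreal (m s) * indicator {norm w..r} s) \<partial>lborel)
       = ennreal (pi * s\<^sup>2 * m s) * indicator {0..r} s" .
  qed
  also have "\<dots> = ennreal ((- (pi * r\<^sup>2 + 2) * exp (-pi * r\<^sup>2 / 2)) - (- (pi * 0\<^sup>2 + 2) * exp (-pi * 0\<^sup>2 / 2)))"
  proof (rule FTC_nn)
    fix x :: real
    show "((\<lambda>s. - (pi * s\<^sup>2 + 2) * exp (-pi * s\<^sup>2 / 2)) has_real_derivative pi * x\<^sup>2 * m x) (at x within {0..r})"
      unfolding m_def by (auto intro!: derivative_eq_intros simp: power2_eq_square algebra_simps)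
  qed (use r mnn in auto)
  also have "ennreal (pi * r\<^sup>2 * exp (-pi * r\<^sup>2 / 2)) + \<dots> = ennreal (2 - 2 * exp (-pi * r\<^sup>2 / 2))"
  proof -
    define y where "y = pi * r\<^sup>2 / 2"
    have "1 + y \<le> exp y" by (rule exp_ge_add_one_self)
    hence "(1 + y) * exp (-y) \<le> exp y * exp (-y)" by (intro mult_right_mono) auto
    hence "(1 + y) * exp (-y) \<le> 1" by (simp add: exp_minus)
    hence k: "2 * exp (- (pi * r\<^sup>2 / 2)) + pi * (r\<^sup>2 * exp (- (pi * r\<^sup>2 / 2))) \<le> 2"
      by (simp add: y_def algebra_simps)
    show ?thesis
      by (subst ennreal_plus[symmetric]) (use k in \<open>auto simp: algebra_simps intro!: mult_nonneg_nonneg\<close>)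
  qed
  finally show ?thesis .
qed



definition Kf :: "real \<Rightarrow> real \<Rightarrow> complex \<Rightarrow> real \<Rightarrow> complex" where
  "Kf x om c t = complex_of_real (gauss (t - x)) * exp (- 2 * complex_of_real pi * \<i> * complex_of_real (om * t))
      * exp (2 * complex_of_real pi * c * complex_of_real (t - x) - complex_of_real pi * c\<^sup>2 / 2)"

definition Ef :: "real \<Rightarrow> real \<Rightarrow> real \<Rightarrow> complex" where
  "Ef x a b = exp (complex_of_real (- pi * (a\<^sup>2 + b\<^sup>2) / 2) + \<i> * complex_of_real (- 2 * pi * b * x - pi * a * b))"

lemma integrand_id:
  "cnj (complex_of_real (gauss (t - fst (x + a, om + b)))) * exp (- 2 * complex_of_real pi * \<i> * complex_of_real (snd (x + a, om + b) * t))
   = Ef x a b * Kf x om (Complex a (-b)) t"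
proof -
  have g: "complex_of_real (gauss y) = complex_of_real (2 powr (1/4)) * exp (complex_of_real (- pi * y\<^sup>2))" for y
    by (simp add: gauss_def flip: exp_of_real)
  have "Ef x a b * Kf x om (Complex a (-b)) t
     = complex_of_real (2 powr (1/4)) * exp ((complex_of_real (- pi * (a\<^sup>2 + b\<^sup>2) / 2) + \<i> * complex_of_real (- 2 * pi * b * x - pi * a * b))
        + complex_of_real (- pi * (t-x)\<^sup>2) + (- 2 * complex_of_real pi * \<i> * complex_of_real (om * t))
        + (2 * complex_of_real pi * Complex a (-b) * complex_of_real (t - x) - complex_of_real pi * (Complex a (-b))\<^sup>2 / 2))"
    unfolding Ef_def Kf_def g exp_add by (simp add: mult_ac)
  also have "(complex_of_real (- pi * (a\<^sup>2 + b\<^sup>2) / 2) + \<i> * complex_of_real (- 2 * pi * b * x - pi * a * b))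
        + complex_of_real (- pi * (t-x)\<^sup>2) + (- 2 * complex_of_real pi * \<i> * complex_of_real (om * t))
        + (2 * complex_of_real pi * Complex a (-b) * complex_of_real (t - x) - complex_of_real pi * (Complex a (-b))\<^sup>2 / 2)
      = complex_of_real (- pi * (t - (x + a))\<^sup>2) + (- 2 * complex_of_real pi * \<i> * complex_of_real ((om + b) * t))"
    by (simp add: complex_eq_iff power2_eq_square field_simps)
  also have "complex_of_real (2 powr (1/4)) * exp (complex_of_real (- pi * (t - (x + a))\<^sup>2) + (- 2 * complex_of_real pi * \<i> * complex_of_real ((om + b) * t)))
    = cnj (complex_of_real (gauss (t - fst (x + a, om + b)))) * exp (- 2 * complex_of_real pi * \<i> * complex_of_real (snd (x + a, om + b) * t))"
    unfolding fst_conv snd_conv complex_cnj_complex_of_real unfolding g exp_add by (simp add: mult_ac)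
  finally show ?thesis ..
qed

lemma norm_Ef: "norm (Ef x a b) = exp (- pi * (a\<^sup>2 + b\<^sup>2) / 2)"
  by (simp add: Ef_def norm_exp_eq_Re)

lemma gauss_pos: "0 < gauss y"
  by (simp add: gauss_def)

lemma norm_Kf: "norm (Kf x om c t) = 2 powr (1/4) * exp (- pi * (t-x)\<^sup>2 + 2 * pi * Re c * (t - x) - pi * ((Re c)\<^sup>2 - (Im c)\<^sup>2) / 2)"
proof -
  have "norm (Kf x om c t) = gauss (t - x) * exp (Re (2 * complex_of_real pi * c * complex_of_real (t - x) - complex_of_real pi * c\<^sup>2 / 2))"
    by (simp add: Kf_def norm_mult norm_exp_eq_Re gauss_pos[THEN less_imp_le])
  also have "Re (2 * complex_of_real pi * c * complex_of_real (t - x) - complex_of_real pi * c\<^sup>2 / 2)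
     = 2 * pi * Re c * (t - x) - pi * ((Re c)\<^sup>2 - (Im c)\<^sup>2) / 2"
    by (simp add: power2_eq_square)
  finally show ?thesis by (simp add: gauss_def exp_add[symmetric])
qed

lemma Kf_bound: "norm (Kf x om c t) \<le> 2 powr (1/4) * exp (3 * pi * (norm c)\<^sup>2 / 2)"
proof -
  have n: "(norm c)\<^sup>2 = (Re c)\<^sup>2 + (Im c)\<^sup>2" by (simp add: cmod_def)
  have "0 \<le> pi * ((t - x - Re c)\<^sup>2 + (Re c)\<^sup>2 + (Im c)\<^sup>2)" by simp
  hence "- pi * (t-x)\<^sup>2 + 2 * pi * Re c * (t - x) - pi * ((Re c)\<^sup>2 - (Im c)\<^sup>2) / 2 \<le> 3 * pi * (norm c)\<^sup>2 / 2"
    unfolding n by (simp add: power2_eq_square field_simps)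
  thus ?thesis unfolding norm_Kf by simp
qed

lemma Kf_holo: "(\<lambda>c. Kf x om c t) holomorphic_on UNIV"
  unfolding Kf_def by (intro holomorphic_intros) auto

lemma gauss_cont: "continuous_on A gauss"
  unfolding gauss_def by (intro continuous_intros)

lemma Kf_cont: "continuous_on UNIV (\<lambda>p::complex \<times> real. Kf x om (fst p) (snd p))"
  unfolding Kf_def
  by (intro continuous_intros continuous_on_compose2[OF gauss_cont[of UNIV]]) auto

lemma has_integral_cancel_const:
  fixes c :: complex
  assumes "((\<lambda>x. c * g x) has_integral (c * k)) S" "c \<noteq> 0"
  shows "(g has_integral k) S"
proof -
  have "((\<lambda>x. inverse c * (c * g x)) has_integral (inverse c * (c * k))) S"
    by (rule has_integral_mult_right[OF assms(1)])
  thus ?thesis using assms(2) by (simp add: field_simps)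
qed

lemma circle_mean:
  assumes hol: "h holomorphic_on UNIV" and s: "0 < s"
  shows "((\<lambda>t. h (of_real s * exp (2 * of_real pi * \<i> * of_real t))) has_integral h 0) {0..1}"
proof -
  have "((\<lambda>u. h u/(u-0)) has_contour_integral (2 * of_real pi * \<i> * h 0)) (circlepath 0 s)"
    by (rule Cauchy_integral_circlepath_simple) (use hol s in \<open>auto intro: holomorphic_on_subset\<close>)
  hence "((\<lambda>x. h (circlepath 0 s x) / (circlepath 0 s x - 0) * vector_derivative (circlepath 0 s) (at x within {0..1}))
      has_integral (2 * of_real pi * \<i> * h 0)) {0..1}"
    by (simp add: has_contour_integral_def)
  hence "((\<lambda>x. (2 * of_real pi * \<i>) * h (of_real s * exp (2 * of_real pi * \<i> * of_real x)))
      has_integral (2 * of_real pi * \<i> * h 0)) {0..1}"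
  proof (rule has_integral_eq[rotated])
    fix x :: real assume "x \<in> {0..1}"
    then show "h (circlepath 0 s x) / (circlepath 0 s x - 0) * vector_derivative (circlepath 0 s) (at x within {0..1}) =
         (2 * of_real pi * \<i>) * h (of_real s * exp (2 * of_real pi * \<i> * of_real x))"
      using s vector_derivative_circlepath01[of x 0 s] \<open>x \<in> {0..1}\<close>
      by (simp add: circlepath field_simps)
  qed
  thus ?thesis by (rule has_integral_cancel_const) simp
qed

lemma circle_mean_gen:
  assumes hol: "h holomorphic_on UNIV"
  shows "((\<lambda>t. h (c * exp (2 * of_real pi * \<i> * of_real t))) has_integral h 0) {0..1}"
proof (cases "c = 0")
  case True
  then show ?thesis using has_integral_const_real[of "h 0" 0 1] by simp
next
  case False
  define h' where "h' u = h (u * (c / of_real (norm c)))" for u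
  have l: "(\<lambda>u. u * (c / of_real (norm c))) holomorphic_on UNIV"
    by (intro holomorphic_on_mult holomorphic_on_const) (simp add: holomorphic_on_ident)
  have "h' holomorphic_on UNIV" unfolding h'_def
    using holomorphic_on_compose_gen[OF l hol] by (simp add: o_def)
  from circle_mean[OF this, of "norm c"] False
  show ?thesis by (simp add: h'_def field_simps)
qed

lemma Kf_circle:
  "(LINT a|lborel. indicator {0..1} a *\<^sub>R Kf x om (c * exp (2 * of_real pi * \<i> * of_real a)) t) = Kf x om 0 t"
proof -
  have cont: "continuous_on {0..1} (\<lambda>a. Kf x om (c * exp (2 * of_real pi * \<i> * of_real a)) t)"
    by (rule continuous_on_compose2[OF Kf_cont, where f="\<lambda>a. (c * exp (2 * of_real pi * \<i> * of_real a), t)", simplified])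
       (auto intro!: continuous_intros)
  have si: "set_integrable lborel {0..1} (\<lambda>a. Kf x om (c * exp (2 * of_real pi * \<i> * of_real a)) t)"
    by (rule borel_integrable_atLeastAtMost'[OF cont])
  have "(LINT a : {0..1} | lborel. Kf x om (c * exp (2 * of_real pi * \<i> * of_real a)) t)
      = integral {0..1} (\<lambda>a. Kf x om (c * exp (2 * of_real pi * \<i> * of_real a)) t)"
    by (rule set_borel_integral_eq_integral(2)[OF si])
  also have "\<dots> = Kf x om 0 t"
    by (rule integral_unique[OF circle_mean_gen[OF Kf_holo]])
  finally show ?thesis by (simp add: set_lebesgue_integral_def)
qed

definition Gf :: "(real \<Rightarrow> complex) \<Rightarrow> real \<Rightarrow> real \<Rightarrow> complex \<Rightarrow> complex" where
  "Gf f x om c = (LINT t|lborel. f t * Kf x om c t)"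

lemma Kf_meas [measurable]: "(\<lambda>p::complex \<times> real. Kf x om (fst p) (snd p)) \<in> borel_measurable borel"
  by (rule borel_measurable_continuous_onI[OF Kf_cont])

lemma Kf_circ_meas [measurable]:
  "(\<lambda>p::real \<times> real. Kf x om (c * exp (2 * of_real pi * \<i> * of_real (fst p))) (snd p)) \<in> borel_measurable borel"
proof -
  have "continuous_on UNIV (\<lambda>p::real \<times> real. Kf x om (c * exp (2 * of_real pi * \<i> * of_real (fst p))) (snd p))"
    by (rule continuous_on_compose2[OF Kf_cont, where f="\<lambda>p. (c * exp (2 * of_real pi * \<i> * of_real (fst p)), snd p)", simplified])
       (auto intro!: continuous_intros)
  thus ?thesis by (rule borel_measurable_continuous_onI)
qed

lemma G_circle:
  assumes f: "integrable lborel f"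
  shows "integrable lborel (\<lambda>a. indicator {0..1::real} a *\<^sub>R Gf f x om (c * exp (2 * of_real pi * \<i> * of_real a)))"
    and "Gf f x om 0 = (LINT a|lborel. indicator {0..1::real} a *\<^sub>R Gf f x om (c * exp (2 * of_real pi * \<i> * of_real a)))"
proof -
  have fm[measurable]: "f \<in> borel_measurable borel" using f by auto
  define C where "C = 2 powr (1/4) * exp (3 * pi * (norm c)\<^sup>2 / 2)"
  have C0: "0 \<le> C" by (simp add: C_def)
  define \<Phi> where "\<Phi> p = indicator {0..1::real} (fst p) *\<^sub>R (f (snd p) * Kf x om (c * exp (2 * of_real pi * \<i> * of_real (fst p))) (snd p))"
    for p :: "real \<times> real"
  have Phim: "\<Phi> \<in> borel_measurable (lborel \<Otimes>\<^sub>M lborel)"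
  proof -
    have [measurable]: "(\<lambda>p::real \<times> real. Kf x om (c * exp (2 * of_real pi * \<i> * of_real (fst p))) (snd p)) \<in> borel_measurable (lborel \<Otimes>\<^sub>M lborel)"
      using Kf_circ_meas by (simp add: lborel_prod)
    show ?thesis unfolding \<Phi>_def by measurable
  qed
  have bnd: "norm (\<Phi> p) \<le> indicator {0..1::real} (fst p) * (C * norm (f (snd p)))" for p
  proof -
    have "norm (Kf x om (c * exp (2 * of_real pi * \<i> * of_real (fst p))) (snd p)) \<le> C"
      using Kf_bound[of x om "c * exp (2 * of_real pi * \<i> * of_real (fst p))" "snd p"]
      by (simp add: C_def norm_mult)
    hence "norm (f (snd p)) * norm (Kf x om (c * exp (2 * of_real pi * \<i> * of_real (fst p))) (snd p)) \<le> C * norm (f (snd p))"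
      by (metis mult.commute mult_left_mono norm_ge_zero)
    thus ?thesis unfolding \<Phi>_def
      by (auto simp: indicator_def norm_mult)
  qed
  have fin: "(\<integral>\<^sup>+t. ennreal (norm (f t)) \<partial>lborel) < \<infinity>"
    using f by (simp add: integrable_iff_bounded)
  have "(\<integral>\<^sup>+p. ennreal (norm (\<Phi> p)) \<partial>(lborel \<Otimes>\<^sub>M lborel))
      \<le> (\<integral>\<^sup>+p. ennreal (indicator {0..1::real} (fst p) * (C * norm (f (snd p)))) \<partial>(lborel \<Otimes>\<^sub>M lborel))"
  proof (rule nn_integral_mono)
    fix p :: "real \<times> real"
    show "ennreal (norm (\<Phi> p)) \<le> ennreal (indicator {0..1::real} (fst p) * (C * norm (f (snd p))))"
      using bnd[of p] by (rule ennreal_leI)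
  qed
  also have "\<dots> = (\<integral>\<^sup>+a. \<integral>\<^sup>+t. ennreal (indicator {0..1::real} a * (C * norm (f t))) \<partial>lborel \<partial>lborel)"
  proof -
    have m: "(\<lambda>p::real \<times> real. ennreal (indicator {0..1::real} (fst p) * (C * norm (f (snd p))))) \<in> borel_measurable (lborel \<Otimes>\<^sub>M lborel)"
      by measurable
    show ?thesis by (subst lborel.nn_integral_fst[OF m, symmetric]) simp
  qed
  also have "\<dots> = (\<integral>\<^sup>+a. indicator {0..1::real} a * (ennreal C * (\<integral>\<^sup>+t. ennreal (norm (f t)) \<partial>lborel)) \<partial>lborel)"
    by (rule nn_integral_cong)
       (auto simp: indicator_def ennreal_mult C0 nn_integral_cmult)
  also have "\<dots> = ennreal C * (\<integral>\<^sup>+t. ennreal (norm (f t)) \<partial>lborel)"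
    by (simp add: nn_integral_multc mult.commute)
  also have "\<dots> < \<infinity>" using fin by (simp add: ennreal_mult_less_top)
  finally have Phii: "integrable (lborel \<Otimes>\<^sub>M lborel) \<Phi>"
    using Phim by (intro integrableI_bounded) auto
  have inner_t: "(LINT t|lborel. \<Phi> (a, t)) = indicator {0..1::real} a *\<^sub>R Gf f x om (c * exp (2 * of_real pi * \<i> * of_real a))" for a
    by (simp add: \<Phi>_def Gf_def)
  have inner_a: "(LINT a|lborel. \<Phi> (a, t)) = f t * Kf x om 0 t" for t
  proof -
    have "(LINT a|lborel. \<Phi> (a, t)) = (LINT a|lborel. f t * (indicator {0..1::real} a *\<^sub>R Kf x om (c * exp (2 * of_real pi * \<i> * of_real a)) t))"
      by (simp add: \<Phi>_def)
    also have "\<dots> = f t * Kf x om 0 t"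
      by (simp only: integral_mult_right_zero Kf_circle)
    finally show ?thesis .
  qed
  show "integrable lborel (\<lambda>a. indicator {0..1::real} a *\<^sub>R Gf f x om (c * exp (2 * of_real pi * \<i> * of_real a)))"
    using lborel_pair.integrable_fst'[OF Phii] by (simp add: inner_t)
  have "(LINT t|lborel. (LINT a|lborel. \<Phi> (a, t))) = (LINT a|lborel. (LINT t|lborel. \<Phi> (a, t)))"
    using lborel_pair.Fubini_integral[of "\<lambda>a t. \<Phi> (a, t)"] Phii by simp
  thus "Gf f x om 0 = (LINT a|lborel. indicator {0..1::real} a *\<^sub>R Gf f x om (c * exp (2 * of_real pi * \<i> * of_real a)))"
    by (simp add: inner_t inner_a Gf_def)
qed



lemma stft_meas:
  assumes fm[measurable]: "f \<in> borel_measurable borel"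
  shows "stft f \<in> borel_measurable borel"
proof -
  have c: "continuous_on UNIV (\<lambda>p::(real \<times> real) \<times> real. cnj (complex_of_real (gauss (snd p - fst (fst p))))
      * exp (- 2 * complex_of_real pi * \<i> * complex_of_real (snd (fst p) * snd p)))"
    by (intro continuous_intros continuous_on_compose2[OF gauss_cont[of UNIV]]) auto
  have [measurable]: "(\<lambda>p::(real \<times> real) \<times> real. cnj (complex_of_real (gauss (snd p - fst (fst p))))
      * exp (- 2 * complex_of_real pi * \<i> * complex_of_real (snd (fst p) * snd p))) \<in> borel_measurable (lborel \<Otimes>\<^sub>M lborel)"
    using borel_measurable_continuous_onI[OF c] by (simp add: lborel_prod)
  have "(\<lambda>z. LINT t|lborel. f t * (cnj (complex_of_real (gauss (t - fst z)))
      * exp (- 2 * complex_of_real pi * \<i> * complex_of_real (snd z * t)))) \<in> borel_measurable lborel"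
    by (rule lborel.borel_measurable_lebesgue_integral) measurable
  thus ?thesis unfolding stft_def by (simp add: mult.assoc)
qed

definition cc :: "real \<times> real \<Rightarrow> complex" where "cc w = Complex (fst w) (- snd w)"

lemma cc_rot: "cc (rot th w) = cc w * exp (\<i> * of_real th)"
  by (simp add: cc_def rot_def complex_eq_iff exp_Euler cos_of_real sin_of_real algebra_simps)

lemma stft_shift:
  "stft f (z + w) = Ef (fst z) (fst w) (snd w) * Gf f (fst z) (snd z) (cc w)"
proof -
  obtain x om a b where zw: "z = (x, om)" "w = (a, b)" by (cases z, cases w)
  have "stft f (z + w) = (LINT t|lborel. f t * (cnj (complex_of_real (gauss (t - fst (x + a, om + b))))
      * exp (- 2 * complex_of_real pi * \<i> * complex_of_real (snd (x + a, om + b) * t))))"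
    by (simp add: stft_def zw mult.assoc)
  also have "\<dots> = (LINT t|lborel. Ef x a b * (f t * Kf x om (Complex a (-b)) t))"
    unfolding integrand_id by (simp add: mult_ac)
  also have "\<dots> = Ef x a b * Gf f x om (Complex a (-b))"
    by (simp add: Gf_def)
  finally show ?thesis by (simp add: zw cc_def)
qed

lemma norm_sq: "(norm (w::real \<times> real))\<^sup>2 = (fst w)\<^sup>2 + (snd w)\<^sup>2"
  by (cases w) (simp add: norm_Pair)

lemma norm_stft_shift:
  "norm (stft f (z + w)) = exp (- pi * (norm w)\<^sup>2 / 2) * norm (Gf f (fst z) (snd z) (cc w))"
  by (simp add: stft_shift norm_mult norm_Ef norm_sq)

lemma pointwise:
  assumes f: "integrable lborel f" and r: "0 < r"
  shows "ennreal (norm (stft f z)) * ennreal (2 - 2 * exp (-pi * r\<^sup>2 / 2))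
         \<le> (\<integral>\<^sup>+ w. ennreal (indicator (ball (0::real\<times>real) r) w * norm (stft f (z + w))) \<partial>lborel)"
proof -
  have fm[measurable]: "f \<in> borel_measurable borel" using f by auto
  define x where "x = fst z"
  define om where "om = snd z"
  define v where "v w = norm (Gf f x om (cc w))" for w
  have v_eq: "v w = norm (stft f (z + w)) * exp (pi * (norm w)\<^sup>2 / 2)" for w
  proof -
    have "norm (stft f (z + w)) * exp (pi * (norm w)\<^sup>2 / 2)
        = (exp (- pi * (norm w)\<^sup>2 / 2) * exp (pi * (norm w)\<^sup>2 / 2)) * v w"
      by (simp add: norm_stft_shift v_def x_def om_def)
    also have "exp (- pi * (norm w)\<^sup>2 / 2) * exp (pi * (norm w)\<^sup>2 / 2) = 1"
      by (simp add: exp_add[symmetric])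
    finally show ?thesis by simp
  qed
  have sm[measurable]: "stft f \<in> borel_measurable borel" by (rule stft_meas[OF fm])
  have vm[measurable]: "v \<in> borel_measurable borel"
  proof -
    have "(\<lambda>w. norm (stft f (z + w)) * exp (pi * (norm w)\<^sup>2 / 2)) \<in> borel_measurable borel"
      by measurable
    thus ?thesis by (simp add: v_eq[abs_def])
  qed
  have v0: "v 0 = norm (stft f z)" by (simp add: v_eq)
  have mean: "ennreal (v 0) \<le> (\<integral>\<^sup>+ a. indicator {0..1} a * ennreal (v (rot (2*pi*a) w)) \<partial>lborel)" for w
  proof -
    have cc0: "cc 0 = 0" by (simp add: cc_def complex_eq_iff)
    have "v 0 = norm (Gf f x om 0)" by (simp add: v_def cc0)
    also have "\<dots> = norm (LINT a|lborel. indicator {0..1::real} a *\<^sub>R Gf f x om (cc w * exp (2 * of_real pi * \<i> * of_real a)))"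
      using G_circle(2)[OF f, of x om "cc w"] by (rule arg_cong)
    finally have "ennreal (v 0) \<le> (\<integral>\<^sup>+ a. norm (indicator {0..1::real} a *\<^sub>R Gf f x om (cc w * exp (2 * of_real pi * \<i> * of_real a))) \<partial>lborel)"
      using integral_norm_bound_ennreal[OF G_circle(1)[OF f, of x om "cc w"]] by simp
    also have "\<dots> = (\<integral>\<^sup>+ a. indicator {0..1} a * ennreal (v (rot (2*pi*a) w)) \<partial>lborel)"
      by (intro nn_integral_cong) (auto simp: v_def cc_rot indicator_def mult_ac)
    finally show ?thesis .
  qed
  define \<psi> where "\<psi> w = indicator (ball (0::real\<times>real) r) w * exp (-pi * (norm w)\<^sup>2 / 2)" for w
  have [measurable]: "ball (0::real\<times>real) r \<in> sets borel" by simp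
  have [measurable]: "(\<lambda>w::real\<times>real. exp (-pi * (norm w)\<^sup>2 / 2)) \<in> borel_measurable borel"
    by (intro borel_measurable_continuous_onI continuous_intros) auto
  have psim[measurable]: "\<psi> \<in> borel_measurable borel" unfolding \<psi>_def by measurable
  have "ennreal (v 0) * (\<integral>\<^sup>+w. \<psi> w \<partial>lborel) \<le> (\<integral>\<^sup>+ w. ennreal (\<psi> w * v w) \<partial>lborel)"
  proof (rule area_mean[OF vm _ psim _ _ mean])
    show "\<And>w. 0 \<le> v w" by (simp add: v_def)
    show "\<And>w. 0 \<le> \<psi> w" by (simp add: \<psi>_def)
    show "\<And>th w. \<psi> (rot th w) = \<psi> w" by (simp add: \<psi>_def indicator_def)
  qed
  also have "(\<integral>\<^sup>+ w. ennreal (\<psi> w * v w) \<partial>lborel)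
      = (\<integral>\<^sup>+ w. ennreal (indicator (ball (0::real\<times>real) r) w * norm (stft f (z + w))) \<partial>lborel)"
  proof (rule nn_integral_cong)
    fix w :: "real \<times> real"
    have "exp (- pi * (norm w)\<^sup>2 / 2) * exp (pi * (norm w)\<^sup>2 / 2) = 1"
      by (simp add: exp_add[symmetric])
    thus "ennreal (\<psi> w * v w) = ennreal (indicator (ball (0::real\<times>real) r) w * norm (stft f (z + w)))"
      by (simp add: \<psi>_def v_eq)
  qed
  also have "(\<integral>\<^sup>+w. \<psi> w \<partial>lborel) = ennreal (2 - 2 * exp (-pi * r\<^sup>2 / 2))"
    unfolding \<psi>_def by (rule gauss_disc[OF r])
  finally show ?thesis by (simp add: v0)
qed



lemma translate_ball:
  fixes u :: "real \<times> real \<Rightarrow> real"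
  assumes [measurable]: "u \<in> borel_measurable borel"
  shows "(\<integral>\<^sup>+ w. ennreal (indicator (ball (0::real\<times>real) r) w * u (z + w)) \<partial>lborel)
       = (\<integral>\<^sup>+ w. ennreal (indicator (ball z r) w * u w) \<partial>lborel)"
proof -
  have [measurable]: "ball z r \<in> sets borel" by simp
  have "(\<integral>\<^sup>+ w. ennreal (indicator (ball z r) w * u w) \<partial>lborel)
      = (\<integral>\<^sup>+ w. ennreal (indicator (ball z r) w * u w) \<partial>distr lborel borel ((+) z))"
    by (simp add: lborel_distr_plus)
  also have "\<dots> = (\<integral>\<^sup>+ w. ennreal (indicator (ball z r) (z + w) * u (z + w)) \<partial>lborel)"
    by (subst nn_integral_distr) simp_all
  also have "\<dots> = (\<integral>\<^sup>+ w. ennreal (indicator (ball (0::real\<times>real) r) w * u (z + w)) \<partial>lborel)"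
    by (intro nn_integral_cong) (simp add: indicator_def dist_norm)
  finally show ?thesis ..
qed

lemma ball_pred_meas [measurable]:
  "(\<lambda>p::(real\<times>real)\<times>(real\<times>real). indicator (ball (fst p) r) (snd p) :: real) \<in> borel_measurable (lborel \<Otimes>\<^sub>M lborel)"
proof -
  have "(\<lambda>p::(real\<times>real)\<times>(real\<times>real). indicator (ball (fst p) r) (snd p) :: real)
      = (\<lambda>p. if dist (fst p) (snd p) < r then 1 else 0)"
    by (auto simp: indicator_def fun_eq_iff)
  also have "\<dots> \<in> borel_measurable (lborel \<Otimes>\<^sub>M lborel)" by measurable
  finally show ?thesis .
qed

theorem theorem1:
  fixes \<Delta> :: "(real \<times> real) set" and f :: "real \<Rightarrow> complex" and R :: real
  assumes "\<Delta> \<in> sets lebesgue" and "f \<in> M1" and "0 < R"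
  shows "L1norm (proj \<Delta> (stft f))
           \<le> nyquist_density \<Delta> R / (1 - exp (- pi / R\<^sup>2)) * L1norm (stft f)"
proof -
  have fi: "integrable lborel f" and Fi: "integrable lebesgue (stft f)"
    using assms(2) by (auto simp: M1_def)
  have fm[measurable]: "f \<in> borel_measurable borel" using fi by auto
  have sm[measurable]: "stft f \<in> borel_measurable borel" by (rule stft_meas[OF fm])
  define r where "r = 1 / R"
  have r: "0 < r" using assms(3) by (simp add: r_def)
  define u where "u z = norm (stft f z)" for z
  have um[measurable]: "u \<in> borel_measurable borel" unfolding u_def by measurable
  have u0: "0 \<le> u z" for z by (simp add: u_def)
  define t where "t = exp (- pi * r\<^sup>2 / 2)"
  define c0 where "c0 = 2 - 2 * t"
  have t1: "t < 1" using r by (simp add: t_def)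
  have c0: "0 < c0" using t1 by (simp add: c0_def)
  define \<rho> where "\<rho> = nyquist_density \<Delta> R"
  obtain S N N' where SN: "\<Delta> = S \<union> N" "N \<subseteq> N'" "N' \<in> null_sets lborel" "S \<in> sets lborel"
    using assms(1) by (rule sets_completionE)
  have Sm[measurable]: "S \<in> sets borel" using SN(4) by simp
  have ballm: "ball z r \<in> sets lborel" for z :: "real \<times> real" by simp
  have emb: "emeasure lborel (ball (z::real\<times>real) r) = ennreal (pi * r\<^sup>2)" for z
    using r by (simp add: emeasure_ball unit_ball_vol_2 power2_eq_square)
  have meas_bd: "measure lebesgue (\<Delta> \<inter> ball z (1/R)) \<le> pi * r\<^sup>2" for z
  proof -
    have "measure lebesgue (\<Delta> \<inter> ball z r) \<le> measure lebesgue (ball z r)"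
      using assms(1) ballm[of z] emb[of z]
      by (intro measure_mono_fmeasurable) (auto simp: fmeasurable_def)
    also have "\<dots> = pi * r\<^sup>2" using emb[of z] ballm[of z] r
      by (simp add: measure_def)
    finally show ?thesis by (simp add: r_def)
  qed
  have rho_ge: "measure lebesgue (\<Delta> \<inter> ball z (1/R)) \<le> \<rho>" for z
    unfolding \<rho>_def nyquist_density_def
    by (rule cSUP_upper) (use meas_bd in \<open>auto intro!: bdd_aboveI2\<close>)
  have rho0: "0 \<le> \<rho>" using rho_ge[of 0] measure_nonneg[of lebesgue "\<Delta> \<inter> ball 0 (1/R)"] by linarith
  have emS: "emeasure lborel (S \<inter> ball w r) \<le> ennreal \<rho>" for w
  proof -
    have Sb: "S \<inter> ball w r \<in> sets lborel" using SN(4) ballm[of w] by auto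
    have "emeasure lborel (S \<inter> ball w r) = emeasure lebesgue (S \<inter> ball w r)"
      using Sb by simp
    also have "\<dots> \<le> emeasure lebesgue (\<Delta> \<inter> ball w r)"
      using assms(1) ballm[of w] SN(1) by (intro emeasure_mono) auto
    also have "\<dots> = ennreal (measure lebesgue (\<Delta> \<inter> ball w r))"
    proof -
      have "emeasure lebesgue (\<Delta> \<inter> ball w r) \<le> emeasure lebesgue (ball w r)"
        using assms(1) ballm[of w] by (intro emeasure_mono) auto
      also have "\<dots> = ennreal (pi * r\<^sup>2)" using ballm[of w] emb[of w] by simp
      finally have "emeasure lebesgue (\<Delta> \<inter> ball w r) \<le> ennreal (pi * r\<^sup>2)" .
      hence "emeasure lebesgue (\<Delta> \<inter> ball w r) < top"
        using ennreal_less_top[of "pi * r\<^sup>2"] by (rule order.strict_trans1)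
      thus ?thesis by (intro emeasure_eq_ennreal_measure) auto
    qed
    also have "\<dots> \<le> ennreal \<rho>" using rho_ge[of w] by (simp add: r_def ennreal_leI)
    finally show ?thesis .
  qed
  have key: "ennreal c0 * (\<integral>\<^sup>+ z. ennreal (indicator S z * u z) \<partial>lborel) \<le> ennreal \<rho> * (\<integral>\<^sup>+ z. ennreal (u z) \<partial>lborel)"
  proof -
    have "ennreal c0 * (\<integral>\<^sup>+ z. ennreal (indicator S z * u z) \<partial>lborel)
        = (\<integral>\<^sup>+ z. indicator S z * (ennreal (u z) * ennreal c0) \<partial>lborel)"
      by (subst nn_integral_cmult[symmetric]) (auto intro!: nn_integral_cong simp: indicator_def mult_ac)
    also have "\<dots> \<le> (\<integral>\<^sup>+ z. indicator S z * (\<integral>\<^sup>+ w. ennreal (indicator (ball z r) w * u w) \<partial>lborel) \<partial>lborel)"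
    proof (intro nn_integral_mono mult_left_mono)
      fix z :: "real \<times> real"
      have "ennreal (u z) * ennreal c0 \<le> (\<integral>\<^sup>+ w. ennreal (indicator (ball (0::real\<times>real) r) w * norm (stft f (z + w))) \<partial>lborel)"
        using pointwise[OF fi r, of z] by (simp add: u_def c0_def t_def)
      also have "\<dots> = (\<integral>\<^sup>+ w. ennreal (indicator (ball z r) w * u w) \<partial>lborel)"
        using translate_ball[OF um, of r z] by (simp add: u_def)
      finally show "ennreal (u z) * ennreal c0 \<le> (\<integral>\<^sup>+ w. ennreal (indicator (ball z r) w * u w) \<partial>lborel)" .
    qed simp
    also have "\<dots> = (\<integral>\<^sup>+ z. \<integral>\<^sup>+ w. ennreal (indicator S z * (indicator (ball z r) w * u w)) \<partial>lborel \<partial>lborel)"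
    proof (rule nn_integral_cong)
      fix z :: "real \<times> real"
      have m: "(\<lambda>w. ennreal (indicator (ball z r) w * u w)) \<in> borel_measurable lborel"
      proof -
        have [measurable]: "ball z r \<in> sets borel" by simp
        show ?thesis by measurable
      qed
      show "indicator S z * (\<integral>\<^sup>+ w. ennreal (indicator (ball z r) w * u w) \<partial>lborel)
          = (\<integral>\<^sup>+ w. ennreal (indicator S z * (indicator (ball z r) w * u w)) \<partial>lborel)"
        by (subst nn_integral_cmult[OF m, symmetric]) (auto intro!: nn_integral_cong simp: indicator_def)
    qed
    also have "\<dots> = (\<integral>\<^sup>+ w. \<integral>\<^sup>+ z. ennreal (indicator S z * (indicator (ball z r) w * u w)) \<partial>lborel \<partial>lborel)"
    proof (rule lborel_pair.Fubini'[symmetric])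
      have [measurable]: "(\<lambda>p::(real\<times>real)\<times>(real\<times>real). indicator (ball (fst p) r) (snd p) :: real) \<in> borel_measurable (lborel \<Otimes>\<^sub>M lborel)"
        by (rule ball_pred_meas)
      show "(\<lambda>(z, w). ennreal (indicator S z * (indicator (ball z r) w * u w))) \<in> borel_measurable (lborel \<Otimes>\<^sub>M lborel)"
        unfolding case_prod_beta by measurable
    qed
    also have "\<dots> = (\<integral>\<^sup>+ w. ennreal (u w) * emeasure lborel (S \<inter> ball w r) \<partial>lborel)"
    proof (rule nn_integral_cong)
      fix w :: "real \<times> real"
      have "(\<integral>\<^sup>+ z. ennreal (indicator S z * (indicator (ball z r) w * u w)) \<partial>lborel)
          = (\<integral>\<^sup>+ z. ennreal (u w) * indicator (S \<inter> ball w r) z \<partial>lborel)"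
        by (intro nn_integral_cong) (auto simp: indicator_def dist_commute)
      also have "\<dots> = ennreal (u w) * emeasure lborel (S \<inter> ball w r)"
        using SN(4) ballm[of w] by (intro nn_integral_cmult_indicator) auto
      finally show "(\<integral>\<^sup>+ z. ennreal (indicator S z * (indicator (ball z r) w * u w)) \<partial>lborel)
          = ennreal (u w) * emeasure lborel (S \<inter> ball w r)" .
    qed
    also have "\<dots> \<le> (\<integral>\<^sup>+ w. ennreal (u w) * ennreal \<rho> \<partial>lborel)"
      by (intro nn_integral_mono mult_left_mono emS) simp
    also have "\<dots> = ennreal \<rho> * (\<integral>\<^sup>+ z. ennreal (u z) \<partial>lborel)"
    proof -
      have m: "(\<lambda>w. ennreal (u w)) \<in> borel_measurable lborel" by measurable
      show ?thesis using nn_integral_cmult[OF m, of "ennreal \<rho>"] by (simp add: mult.commute)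
    qed
    finally show ?thesis .
  qed
  define X where "X = (\<integral>\<^sup>+ z. ennreal (indicator S z * u z) \<partial>lborel)"
  define Y where "Y = (\<integral>\<^sup>+ z. ennreal (u z) \<partial>lborel)"
  have Yfin: "Y < \<infinity>"
  proof -
    have "(\<integral>\<^sup>+ z. ennreal (norm (stft f z)) \<partial>lebesgue) < \<infinity>"
      using Fi by (simp add: integrable_iff_bounded)
    thus ?thesis by (simp add: Y_def u_def nn_integral_completion)
  qed
  have XY: "X \<le> Y" unfolding X_def Y_def
    by (intro nn_integral_mono) (auto simp: indicator_def u0)
  obtain x where x: "X = ennreal x" "0 \<le> x" using XY Yfin
    by (cases X) (auto simp: top_unique)
  obtain y where y: "Y = ennreal y" "0 \<le> y" using Yfin by (cases Y) auto
  have "ennreal (c0 * x) \<le> ennreal (\<rho> * y)"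
    using key c0 rho0 x y by (simp add: X_def[symmetric] Y_def[symmetric] ennreal_mult)
  hence cxy: "c0 * x \<le> \<rho> * y" using rho0 y by (simp add: ennreal_le_iff)
  have L1F: "L1norm (stft f) = y"
  proof -
    have "L1norm (stft f) = (LINT z|lborel. u z)"
      unfolding L1norm_def u_def by (rule integral_completion) measurable
    also have "\<dots> = enn2real Y" unfolding Y_def by (rule integral_eq_nn_integral) (auto simp: u0)
    finally show ?thesis using y by simp
  qed
  have L1P: "L1norm (proj \<Delta> (stft f)) = x"
  proof -
    have AEN: "AE z in lebesgue. z \<notin> N'"
      using SN(3) by (intro AE_completion) (rule AE_not_in)
    have "L1norm (proj \<Delta> (stft f)) = (LINT z|lebesgue. indicator \<Delta> z * u z)"
      unfolding L1norm_def proj_def u_def by (intro Bochner_Integration.integral_cong) (auto simp: norm_mult indicator_def)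
    also have "\<dots> = (LINT z|lebesgue. indicator S z * u z)"
    proof (rule integral_cong_AE)
      have "(\<lambda>z. u z) \<in> borel_measurable lebesgue" by (rule measurable_completion) simp
      moreover have "(indicator \<Delta> :: real \<times> real \<Rightarrow> real) \<in> borel_measurable lebesgue"
        using assms(1) by simp
      ultimately show "(\<lambda>z. indicator \<Delta> z * u z) \<in> borel_measurable lebesgue" by simp
      have "(\<lambda>z. indicator S z * u z) \<in> borel_measurable lborel" by measurable
      thus "(\<lambda>z. indicator S z * u z) \<in> borel_measurable lebesgue" by (rule measurable_completion)
      show "AE z in lebesgue. indicator \<Delta> z * u z = indicator S z * u z"
        using AEN by eventually_elim (use SN(1,2) in \<open>auto simp: indicator_def\<close>)
    qed
    also have "\<dots> = (LINT z|lborel. indicator S z * u z)"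
      by (rule integral_completion) measurable
    also have "\<dots> = enn2real X" unfolding X_def by (rule integral_eq_nn_integral) (auto simp: u0)
    finally show ?thesis using x by simp
  qed
  define d where "d = 1 - exp (- pi / R\<^sup>2)"
  have tt: "exp (- pi / R\<^sup>2) = t * t"
    by (simp add: t_def r_def exp_add[symmetric] power2_eq_square field_simps)
  have t0: "0 < t" by (simp add: t_def)
  have d0: "0 < d" using assms(3) by (simp add: d_def)
  have dc: "d \<le> c0"
  proof -
    have "0 \<le> (1 - t) * (1 - t)" by simp
    have d_eq: "d = 1 - t * t" unfolding d_def tt ..
    show ?thesis using \<open>0 \<le> (1 - t) * (1 - t)\<close> by (simp add: d_eq c0_def algebra_simps)
  qed
  have "d * x \<le> c0 * x" using dc x(2) by (rule mult_right_mono)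
  hence "d * x \<le> \<rho> * y" using cxy by linarith
  hence "x \<le> \<rho> / d * y" using d0 by (simp add: field_simps)
  thus ?thesis using L1F L1P by (simp add: \<rho>_def d_def)
qed


end
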